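(* Let $F$ be a distribution function on $[0,1]$ with a positive, non-increasing, differentiable density $g$ and non-decreasing hazard ratio $g(x)/(1-F(x))$. Let $\{f_{i,j}\}$, $f_{i,j}=f_{j,i}$, be independent with distribution $F$, let $I\subseteq[n]$, $|I|=r$, and let $D_I$ be the event that $f_{i,j}\ge (f_{i,i}+f_{j,j})/2$ for all distinct $i,j\in I$. For $C\subseteq[0,1]^r$ set $\mathrm{P}_C(D_I)=\mathrm{P}\bigl(D_I\cap\{(f_{i,i})_{i\in I}\in C\}\bigr)$. Let $C_1=\{\mathbf x\in[0,1]^r: |\sum_{i}F(x_i)-2|\le r^{-1/3}\}$ and, for fixed $k>1$, \[ C_2=\Bigl\{\mathbf x\in C_1:\ \max_i\frac{F(x_i)}{\sum_jF(x_j)}\le k\frac{\log r}{r}\Bigr\}. \] Then for every $\alpha<k-1$ and all sufficiently large $r$, \[ \mathrm{P}_{C_1}(D_I)-\mathrm{P}_{C_2}(D_I)\le\left(\frac{2}{r}\right)^r r^{-\alpha}. \] *)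

theory Defs
  imports "HOL-Probability.Probability"
begin

text \<open>Index pairs (i,j) with i \<le> j < n: one independent weight f_{i,j} = f_{j,i} per pair.\<close>
definition pairs :: "nat \<Rightarrow> (nat \<times> nat) set" where
  "pairs n = {(i, j). i \<le> j \<and> j < n}"

definition dens_measure :: "(real \<Rightarrow> real) \<Rightarrow> real measure" where
  "dens_measure g = density lborel (\<lambda>x. ennreal (indicator {0..1} x * g x))"

definition weight_space :: "nat \<Rightarrow> (real \<Rightarrow> real) \<Rightarrow> ((nat \<times> nat) \<Rightarrow> real) measure" where
  "weight_space n g = PiM (pairs n) (\<lambda>_. dens_measure g)"

definition fval :: "((nat \<times> nat) \<Rightarrow> real) \<Rightarrow> nat \<Rightarrow> nat \<Rightarrow> real" where
  "fval \<omega> i j = \<omega> (min i j, max i j)"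

definition event_D :: "nat \<Rightarrow> (real \<Rightarrow> real) \<Rightarrow> nat set \<Rightarrow> ((nat \<times> nat) \<Rightarrow> real) set" where
  "event_D n g I = {\<omega> \<in> space (weight_space n g).
     \<forall>i\<in>I. \<forall>j\<in>I. i \<noteq> j \<longrightarrow> fval \<omega> i j \<ge> (fval \<omega> i i + fval \<omega> j j) / 2}"

definition prob_C :: "nat \<Rightarrow> (real \<Rightarrow> real) \<Rightarrow> nat set \<Rightarrow> ((nat \<Rightarrow> real) \<Rightarrow> bool) \<Rightarrow> real" where
  "prob_C n g I C = measure (weight_space n g)
     (event_D n g I \<inter> {\<omega> \<in> space (weight_space n g). C (\<lambda>i. fval \<omega> i i)})"

definition in_C1 :: "(real \<Rightarrow> real) \<Rightarrow> nat set \<Rightarrow> (nat \<Rightarrow> real) \<Rightarrow> bool" where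
  "in_C1 F I x \<longleftrightarrow> (\<forall>i\<in>I. x i \<in> {0..1}) \<and>
     \<bar>(\<Sum>i\<in>I. F (x i)) - 2\<bar> \<le> real (card I) powr (-1/3)"

definition in_C2 :: "(real \<Rightarrow> real) \<Rightarrow> real \<Rightarrow> nat set \<Rightarrow> (nat \<Rightarrow> real) \<Rightarrow> bool" where
  "in_C2 F k I x \<longleftrightarrow> in_C1 F I x \<and>
     (\<forall>i\<in>I. F (x i) / (\<Sum>j\<in>I. F (x j)) \<le> k * ln (real (card I)) / real (card I))"

end

theory Submission
  imports Defs
begin

locale setting =
  fixes g F :: "real \<Rightarrow> real"
  assumes g_pos: "\<forall>x\<in>{0..1}. g x > 0"
    and g_noninc: "antimono_on {0..1} g"
    and g_diff: "\<forall>x\<in>{0..1}. g differentiable (at x within {0..1})"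
    and g_int: "g integrable_on {0..1}"
    and g_total: "integral {0..1} g = 1"
    and F_def: "\<forall>x\<in>{0..1}. F x = integral {0..x} g"
begin

definition clamp :: "real \<Rightarrow> real" where "clamp u = max 0 (min 1 u)"
definition F' where "F' u = F (clamp u)"
definition g' where "g' u = g (clamp u)"

lemma clamp_in: "clamp u \<in> {0..1}" by (auto simp: clamp_def)
lemma clamp_id: "u \<in> {0..1} \<Longrightarrow> clamp u = u" by (auto simp: clamp_def)
lemma cont_clamp: "continuous_on A clamp" unfolding clamp_def by (intro continuous_intros)

lemma g_cont: "continuous_on {0..1} g"
  using g_diff by (simp add: continuous_on_eq_continuous_within differentiable_imp_continuous_within)

lemma g_nonneg: "x \<in> {0..1} \<Longrightarrow> 0 \<le> g x" using g_pos by (simp add: less_imp_le)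

lemma F_deriv: "x \<in> {0..1} \<Longrightarrow> (F has_vector_derivative g x) (at x within {0..1})"
proof -
  assume x: "x \<in> {0..1}"
  have "((\<lambda>u. integral {0..u} g) has_vector_derivative g x) (at x within {0..1})"
    by (rule integral_has_vector_derivative[OF g_cont x])
  then show ?thesis
    by (rule has_vector_derivative_transform_within[where d=1]) (use x F_def in auto)
qed

lemma F_cont: "continuous_on {0..1} F"
  using F_deriv by (meson continuous_on_eq_continuous_within has_vector_derivative_continuous)

lemma g'_cont: "continuous_on UNIV g'"
proof -
  have "clamp ` UNIV \<subseteq> {0..1}" using clamp_in by auto
  then have "continuous_on UNIV (g \<circ> clamp)"
    by (intro continuous_on_compose cont_clamp continuous_on_subset[OF g_cont])
  then show ?thesis by (simp add: g'_def comp_def)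
qed

lemma F'_cont: "continuous_on UNIV F'"
proof -
  have "clamp ` UNIV \<subseteq> {0..1}" using clamp_in by auto
  then have "continuous_on UNIV (F \<circ> clamp)"
    by (intro continuous_on_compose cont_clamp continuous_on_subset[OF F_cont])
  then show ?thesis by (simp add: F'_def comp_def)
qed

lemma F'_meas[measurable]: "F' \<in> borel_measurable borel"
  using F'_cont borel_measurable_continuous_onI by blast

lemma dens_eq: "(\<lambda>x. ennreal (indicator {0..1} x * g x)) = (\<lambda>x. ennreal (indicator {0..1} x * g' x))"
  by (auto simp: g'_def clamp_id indicator_def)

lemma dens_meas[measurable]: "(\<lambda>x. ennreal (indicator {0..1} x * g x)) \<in> borel_measurable lborel"
proof -
  have "g' \<in> borel_measurable borel" using g'_cont borel_measurable_continuous_onI by blast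
  then show ?thesis unfolding dens_eq by measurable
qed

definition \<mu> where "\<mu> = dens_measure g"

lemma F0: "F 0 = 0" using F_def by auto
lemma F1: "F 1 = 1" using F_def g_total by auto

lemma int_tail: "a \<in> {0..1} \<Longrightarrow> integral {a..1} g = 1 - F a"
  using Henstock_Kurzweil_Integration.integral_combine[of 0 a 1 g] g_int F_def g_total by auto

lemma nn_tail:
  assumes a: "a \<in> {0..1}"
  shows "(\<integral>\<^sup>+x. ennreal (g x) * indicator {a..1} x \<partial>lborel) = ennreal (1 - F a)"
proof -
  have "g integrable_on {a..1}" using integrable_subinterval_real[OF g_int] a by auto
  then have "(g has_integral (integral {a..1} g)) {a..1}" by (simp add: has_integral_integral)
  then have "(\<integral>\<^sup>+x. ennreal (g x) * indicator {a..1} x \<partial>lborel) = ennreal (integral {a..1} g)"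
    by (intro nn_integral_has_integral_lebesgue') (use a g_nonneg in auto)
  then show ?thesis using int_tail[OF a] by simp
qed

lemma emeasure_ge:
  assumes a: "a \<in> {0..1}"
  shows "emeasure \<mu> {a..} = ennreal (1 - F a)"
proof -
  have "emeasure \<mu> {a..} = (\<integral>\<^sup>+x. ennreal (indicator {0..1} x * g x) * indicator {a..} x \<partial>lborel)"
    unfolding \<mu>_def dens_measure_def by (rule emeasure_density) auto
  also have "\<dots> = (\<integral>\<^sup>+x. ennreal (g x) * indicator {a..1} x \<partial>lborel)"
    by (intro nn_integral_cong) (use a in \<open>auto simp: indicator_def\<close>)
  finally show ?thesis using nn_tail[OF a] by simp
qed

lemma space_mu[simp]: "space \<mu> = UNIV" and sets_mu[simp]: "sets \<mu> = sets borel"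
  by (auto simp: \<mu>_def dens_measure_def)

lemma prob_mu: "prob_space \<mu>"
proof
  have "emeasure \<mu> UNIV = (\<integral>\<^sup>+x. ennreal (indicator {0..1} x * g x) * indicator UNIV x \<partial>lborel)"
    unfolding \<mu>_def dens_measure_def by (rule emeasure_density) auto
  also have "\<dots> = (\<integral>\<^sup>+x. ennreal (g x) * indicator {0..1} x \<partial>lborel)"
    by (intro nn_integral_cong) (auto simp: indicator_def)
  finally show "emeasure \<mu> (space \<mu>) = 1" using nn_tail[of 0] F0 by simp
qed

lemma F_rderiv: "x \<in> {0..1} \<Longrightarrow> (F has_real_derivative g x) (at x within {0..1})"
  using F_deriv has_real_derivative_iff_has_vector_derivative by blast

lemma exp_int:
  assumes m: "m > 0"
  shows "(\<integral>\<^sup>+u. ennreal (indicator {0..1} u * exp (- m * F' u)) \<partial>\<mu>) = ennreal ((1 - exp (-m)) / m)"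
proof -
  define h where "h x = - exp (- m * F x) / m" for x
  have d: "(h has_vector_derivative (g x * exp (- m * F x))) (at x within {0..1})" if x: "x \<in> {0..1}" for x
  proof -
    have dF: "(F has_real_derivative g x) (at x within {0..1})" using F_rderiv[OF x] .
    have "(h has_real_derivative (- (exp (- m * F x) * (- m * g x)) / m)) (at x within {0..1})"
      unfolding h_def using m by (auto intro!: derivative_eq_intros dF)
    moreover have "- (exp (- m * F x) * (- m * g x)) / m = g x * exp (- m * F x)" using m by simp
    ultimately show ?thesis using has_real_derivative_iff_has_vector_derivative by metis
  qed
  have I: "((\<lambda>x. g x * exp (- m * F x)) has_integral (h 1 - h 0)) {0..1}"
    by (rule fundamental_theorem_of_calculus) (use d in auto)
  have hv: "h 1 - h 0 = (1 - exp (-m)) / m" unfolding h_def using F0 F1 m by (simp add: field_simps)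
  have meas: "(\<lambda>u. ennreal (indicator {0..1} u * exp (- m * F' u))) \<in> borel_measurable \<mu>"
    unfolding \<mu>_def dens_measure_def by measurable
  have "(\<integral>\<^sup>+u. ennreal (indicator {0..1} u * exp (- m * F' u)) \<partial>\<mu>) =
     (\<integral>\<^sup>+u. ennreal (indicator {0..1} u * g u) * ennreal (indicator {0..1} u * exp (- m * F' u)) \<partial>lborel)"
    unfolding \<mu>_def dens_measure_def by (rule nn_integral_density) (use meas in \<open>auto simp: \<mu>_def dens_measure_def\<close>)
  also have "\<dots> = (\<integral>\<^sup>+u. ennreal (g u * exp (- m * F u)) * indicator {0..1} u \<partial>lborel)"
    by (intro nn_integral_cong) (auto simp: indicator_def F'_def clamp_id ennreal_mult' g_nonneg)
  also have "\<dots> = ennreal (h 1 - h 0)"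
    by (rule nn_integral_has_integral_lebesgue'[OF _ I]) (auto intro!: mult_nonneg_nonneg g_nonneg)
  finally show ?thesis using hv by simp
qed

lemma F_mono: "a \<in> {0..1} \<Longrightarrow> b \<in> {0..1} \<Longrightarrow> a \<le> b \<Longrightarrow> F a \<le> F b"
proof -
  assume a: "a \<in> {0..1}" and b: "b \<in> {0..1}" and ab: "a \<le> b"
  have "integral {0..a} g + integral {a..b} g = integral {0..b} g"
    by (rule Henstock_Kurzweil_Integration.integral_combine) (use a b ab integrable_subinterval_real[OF g_int, of 0 b] in auto)
  moreover have "integral {a..b} g \<ge> 0"
    by (rule integral_nonneg) (use a b integrable_subinterval_real[OF g_int, of a b] g_nonneg in auto)
  ultimately show ?thesis using F_def a b by auto
qed

lemma F_range: "a \<in> {0..1} \<Longrightarrow> F a \<in> {0..1}"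
  using F_mono[of 0 a] F_mono[of a 1] F0 F1 by auto

lemma F_concave:
  assumes a: "a \<in> {0..1}" and b: "b \<in> {0..1}" and ab: "a \<le> b"
  shows "F a + F b \<le> 2 * F ((a + b) / 2)"
proof -
  define mi where "mi = (a + b) / 2"
  have mi: "mi \<in> {0..1}" "a \<le> mi" "mi \<le> b" using a b ab by (auto simp: mi_def)
  have i1: "g integrable_on {a..mi}" using integrable_subinterval_real[OF g_int] a mi by auto
  have i2: "g integrable_on {mi..b}" using integrable_subinterval_real[OF g_int] b mi by auto
  have e1: "F mi - F a = integral {a..mi} g"
    using Henstock_Kurzweil_Integration.integral_combine[of 0 a mi g] integrable_subinterval_real[OF g_int, of 0 mi] a mi F_def by auto
  have e2: "F b - F mi = integral {mi..b} g"
    using Henstock_Kurzweil_Integration.integral_combine[of 0 mi b g] integrable_subinterval_real[OF g_int, of 0 b] b mi F_def by auto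
  have "integral {a..mi} (\<lambda>_. g mi) \<le> integral {a..mi} g"
    by (rule integral_le[OF _ i1]) (use a mi g_noninc in \<open>auto simp: monotone_on_def\<close>)
  then have l1: "(mi - a) * g mi \<le> integral {a..mi} g" using mi by simp
  have "integral {mi..b} g \<le> integral {mi..b} (\<lambda>_. g mi)"
    by (rule integral_le[OF i2]) (use b mi g_noninc in \<open>auto simp: monotone_on_def\<close>)
  then have l2: "integral {mi..b} g \<le> (b - mi) * g mi" using mi by simp
  have "mi - a = b - mi" by (simp add: mi_def field_simps)
  then have "(mi - a) * g mi = (b - mi) * g mi" by simp
  then have "F a + F b \<le> 2 * F mi" using e1 e2 l1 l2 by linarith
  then show ?thesis by (simp add: mi_def)
qed

end

lemma sum_OD:
  fixes a :: "nat \<Rightarrow> real"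
  assumes fin: "finite I"
  shows "(\<Sum>p\<in>{(j,l). j\<in>I \<and> l\<in>I \<and> j<l}. a (fst p) + a (snd p)) = (real (card I) - 1) * (\<Sum>j\<in>I. a j)"
proof -
  define OD where "OD = {(j,l). j\<in>I \<and> l\<in>I \<and> j<l}"
  define OD' where "OD' = {(j,l). j\<in>I \<and> l\<in>I \<and> l<j}"
  have fOD: "finite OD" "finite OD'" using fin unfolding OD_def OD'_def
    by (auto intro: finite_subset[of _ "I \<times> I"])
  have sw: "(\<Sum>p\<in>OD. a (snd p)) = (\<Sum>p\<in>OD'. a (fst p))"
  proof -
    have e: "OD' = (\<lambda>(j,l). (l,j)) ` OD" unfolding OD_def OD'_def by auto
    have i: "inj_on (\<lambda>(j,l). (l,j)) OD" by (auto simp: inj_on_def)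
    show ?thesis unfolding e by (subst sum.reindex[OF i]) (simp add: case_prod_beta)
  qed
  have un: "OD \<union> OD' = Sigma I (\<lambda>j. I - {j})" unfolding OD_def OD'_def by auto
  have dj: "OD \<inter> OD' = {}" unfolding OD_def OD'_def by auto
  have "(\<Sum>p\<in>OD. a (fst p) + a (snd p)) = (\<Sum>p\<in>OD. a (fst p)) + (\<Sum>p\<in>OD'. a (fst p))"
    by (simp add: sum.distrib sw)
  also have "\<dots> = (\<Sum>p\<in>Sigma I (\<lambda>j. I - {j}). a (fst p))"
    using sum.union_disjoint[OF fOD dj, of "\<lambda>p. a (fst p)"] un by simp
  also have "\<dots> = (\<Sum>j\<in>I. \<Sum>l\<in>I - {j}. a j)"
    using sum.Sigma[of I "\<lambda>j. I - {j}" "\<lambda>j l. a j"] fin by (simp add: split_def)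
  also have "\<dots> = (\<Sum>j\<in>I. (real (card I) - 1) * a j)"
  proof (intro sum.cong refl)
    fix j assume j: "j \<in> I"
    then have "card I \<ge> 1" using fin by (metis One_nat_def Suc_leI card_gt_0_iff empty_iff)
    then show "(\<Sum>l\<in>I - {j}. a j) = (real (card I) - 1) * a j" using j fin by (simp add: card_Diff_singleton of_nat_diff)
  qed
  finally show ?thesis unfolding OD_def by (simp add: sum_distrib_left)
qed

lemma pred_le_real[measurable (raw)]:
  fixes f h :: "'a \<Rightarrow> real"
  shows "f \<in> borel_measurable M \<Longrightarrow> h \<in> borel_measurable M \<Longrightarrow> Measurable.pred M (\<lambda>x. f x \<le> h x)"
  unfolding pred_def by (rule borel_measurable_le)

context setting begin

abbreviation "MM n \<equiv> PiM (pairs n) (\<lambda>_. \<mu>)"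

lemma weight_space_eq: "weight_space n g = MM n"
  by (simp add: weight_space_def \<mu>_def)

lemma comp_meas[measurable]: "(\<lambda>\<omega>. \<omega> p) \<in> borel_measurable (PiM K (\<lambda>_. \<mu>))"
proof (cases "p \<in> K")
  case True
  then have "(\<lambda>\<omega>. \<omega> p) \<in> measurable (PiM K (\<lambda>_. \<mu>)) \<mu>" by (rule measurable_component_singleton)
  then show ?thesis using measurable_cong_sets[OF refl sets_mu, of "PiM K (\<lambda>_. \<mu>)"] by blast
next
  case False
  have "(\<lambda>\<omega>. \<omega> p) \<in> borel_measurable (PiM K (\<lambda>_. \<mu>)) \<longleftrightarrow> (\<lambda>\<omega>. undefined :: real) \<in> borel_measurable (PiM K (\<lambda>_. \<mu>))"
    by (rule measurable_cong) (use False in \<open>auto simp: space_PiM PiE_def extensional_def\<close>)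
  then show ?thesis by simp
qed

definition OD :: "nat set \<Rightarrow> (nat \<times> nat) set" where
  "OD I = {(j,l). j\<in>I \<and> l\<in>I \<and> j<l}"

definition Aev :: "nat \<Rightarrow> nat set \<Rightarrow> real \<Rightarrow> nat \<Rightarrow> ((nat \<times> nat) \<Rightarrow> real) set" where
  "Aev n I c i = {\<omega> \<in> space (MM n). (\<forall>j\<in>I. \<omega> (j,j) \<in> {0..1}) \<and>
     (\<forall>p\<in>OD I. (\<omega> (fst p, fst p) + \<omega> (snd p, snd p)) / 2 \<le> \<omega> p) \<and>
     c * (\<Sum>j\<in>I. F' (\<omega> (j,j))) \<le> F' (\<omega> (i,i))}"

lemma finite_OD: "finite I \<Longrightarrow> finite (OD I)"
  unfolding OD_def by (auto intro: finite_subset[of _ "I \<times> I"])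

lemma Aev_meas: "finite I \<Longrightarrow> Aev n I c i \<in> sets (MM n)"
proof -
  assume fin: "finite I"
  note finite_OD[OF fin, measurable]
  note fin[measurable]
  have "(\<lambda>x::(nat\<times>nat)\<Rightarrow>real. x (fst p, fst p)) \<in> borel_measurable (MM n)" for p by measurable
  have "(\<lambda>x::(nat\<times>nat)\<Rightarrow>real. (x (fst p, fst p) + x (snd p, snd p)) / 2) \<in> borel_measurable (MM n)" for p by measurable
  have "(\<lambda>x::(nat\<times>nat)\<Rightarrow>real. F' (x (i, i))) \<in> borel_measurable (MM n)" by measurable
  have "(\<lambda>x::(nat\<times>nat)\<Rightarrow>real. c * (\<Sum>j\<in>I. F' (x (j, j)))) \<in> borel_measurable (MM n)" by measurable
  show ?thesis unfolding Aev_def by measurable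
qed

end

context setting begin

lemma pairs_fin: "finite (pairs n)"
  unfolding pairs_def by (rule finite_subset[of _ "{0..<n} \<times> {0..<n}"]) auto

lemma emeasure_ge_le:
  assumes a: "a \<in> {0..1}" and b: "b \<in> {0..1}"
  shows "1 - F ((a + b) / 2) \<le> exp (- (F a + F b) / 2)"
proof -
  have "F a + F b \<le> 2 * F ((a + b) / 2)"
  proof (cases "a \<le> b")
    case True then show ?thesis using F_concave[OF a b] by simp
  next
    case False then show ?thesis using F_concave[OF b a] by (simp add: add.commute)
  qed
  then have "1 - F ((a + b) / 2) \<le> 1 + (- (F a + F b) / 2)" by simp
  also have "\<dots> \<le> exp (- (F a + F b) / 2)" using exp_ge_add_one_self[of "- (F a + F b) / 2"] by linarith
  finally show ?thesis .
qed

lemma main_bound: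
  assumes fin: "finite I" and In: "I \<subseteq> {0..<n}" and i: "i \<in> I" and t: "0 \<le> t"
    and mi: "0 < lam + t * c - t" and lam: "lam = (real (card I) - 1) / 2"
  shows "emeasure (MM n) (Aev n I c i) \<le> ennreal (1 / (lam + t * c - t) * (1 / (lam + t * c)) ^ (card I - 1))"
proof -
  interpret PS: product_sigma_finite "\<lambda>_::nat\<times>nat. \<mu>"
    by (rule product_sigma_finite.intro) (rule prob_space_imp_sigma_finite[OF prob_mu])
  define Dg where "Dg = (\<lambda>j. (j,j)) ` I"
  define Rst where "Rst = pairs n - Dg"
  have DgP: "Dg \<subseteq> pairs n" using In unfolding Dg_def pairs_def by auto
  have DgR: "Dg \<inter> Rst = {}" "pairs n = Dg \<union> Rst" "finite Dg" "finite Rst"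
    using DgP pairs_fin[of n] fin unfolding Rst_def Dg_def by auto
  have ODR: "OD I \<subseteq> Rst" using In unfolding OD_def Rst_def Dg_def pairs_def by auto
  have finOD: "finite (OD I)" using finite_OD[OF fin] .
  define S where "S \<omega> = (\<Sum>j\<in>I. F' (\<omega> (j,j)))" for \<omega> :: "nat \<times> nat \<Rightarrow> real"
  define G where "G \<omega> = (\<Prod>j\<in>I. indicator {0..1} (\<omega> (j,j)) :: real) * exp (t * (F' (\<omega> (i,i)) - c * S \<omega>))"
    for \<omega> :: "nat \<times> nat \<Rightarrow> real"
  define hp where "hp \<omega> p = (\<omega> (fst p, fst p) + \<omega> (snd p, snd p)) / 2" for \<omega> :: "nat \<times> nat \<Rightarrow> real" and p
  define R where "R \<omega> = (\<Prod>p\<in>OD I. if hp \<omega> p \<le> \<omega> p then 1 else 0 :: real) * G \<omega>" for \<omega>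
  have Gnn: "0 \<le> G \<omega>" for \<omega> unfolding G_def by (intro mult_nonneg_nonneg prod_nonneg) auto
  have Rnn: "0 \<le> R \<omega>" for \<omega> unfolding R_def using Gnn by (intro mult_nonneg_nonneg prod_nonneg) auto
  have Rmeas: "(\<lambda>\<omega>. ennreal (R \<omega>)) \<in> borel_measurable (PiM K (\<lambda>_. \<mu>))" for K
  proof -
    note fin[measurable] finOD[measurable]
    show ?thesis unfolding R_def G_def S_def hp_def by measurable
  qed
  have step1: "emeasure (MM n) (Aev n I c i) \<le> (\<integral>\<^sup>+\<omega>. ennreal (R \<omega>) \<partial>MM n)"
  proof -
    have "emeasure (MM n) (Aev n I c i) = (\<integral>\<^sup>+\<omega>. indicator (Aev n I c i) \<omega> \<partial>MM n)"
      using Aev_meas[OF fin] by simp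
    also have "\<dots> \<le> (\<integral>\<^sup>+\<omega>. ennreal (R \<omega>) \<partial>MM n)"
    proof (rule nn_integral_mono)
      fix \<omega> assume "\<omega> \<in> space (MM n)"
      show "indicator (Aev n I c i) \<omega> \<le> ennreal (R \<omega>)"
      proof (cases "\<omega> \<in> Aev n I c i")
        case True
        then have A: "\<forall>j\<in>I. \<omega> (j,j) \<in> {0..1}" "\<forall>p\<in>OD I. hp \<omega> p \<le> \<omega> p" "c * S \<omega> \<le> F' (\<omega> (i,i))"
          unfolding Aev_def hp_def S_def by auto
        have p1: "(\<Prod>p\<in>OD I. if hp \<omega> p \<le> \<omega> p then 1 else 0 :: real) = 1"
          using A(2) by (intro prod.neutral) auto
        have p2: "(\<Prod>j\<in>I. indicator {0..1} (\<omega> (j,j)) :: real) = 1"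
          using A(1) by (intro prod.neutral) auto
        have "1 \<le> exp (t * (F' (\<omega> (i,i)) - c * S \<omega>))" using A(3) t by simp
        then have "1 \<le> R \<omega>" unfolding R_def G_def p1 p2 by simp
        then show ?thesis using True by simp
      qed simp
    qed
    finally show ?thesis .
  qed
  have step2: "(\<integral>\<^sup>+\<omega>. ennreal (R \<omega>) \<partial>MM n) =
     (\<integral>\<^sup>+x. (\<integral>\<^sup>+y. ennreal (R (merge Dg Rst (x, y))) \<partial>PiM Rst (\<lambda>_. \<mu>)) \<partial>PiM Dg (\<lambda>_. \<mu>))"
    unfolding DgR(2) by (rule PS.product_nn_integral_fold[OF DgR(1,3,4) Rmeas])

  define Q where "Q x = G x * (\<Prod>p\<in>OD I. exp (- (F' (x (fst p, fst p)) + F' (x (snd p, snd p))) / 2))" for x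
  have step3: "(\<integral>\<^sup>+y. ennreal (R (merge Dg Rst (x, y))) \<partial>PiM Rst (\<lambda>_. \<mu>)) \<le> ennreal (Q x)" for x
  proof -
    define f where "f p u = (if p \<in> OD I then (if hp x p \<le> u then 1 else 0) else 1 :: real)" for p u
    have mgD: "merge Dg Rst (x, y) (j,j) = x (j,j)" if "j \<in> I" for j y
      using that DgR(1) unfolding Dg_def by simp
    have mgR: "merge Dg Rst (x, y) p = y p" if "p \<in> OD I" for p y
      using that DgR(1) ODR by auto
    have GM: "G (merge Dg Rst (x, y)) = G x" for y
      unfolding G_def S_def using mgD i by (simp cong: prod.cong sum.cong)
    have eqR: "R (merge Dg Rst (x, y)) = G x * (\<Prod>p\<in>Rst. f p (y p))" for y
    proof -
      have "(\<Prod>p\<in>OD I. if hp (merge Dg Rst (x, y)) p \<le> merge Dg Rst (x, y) p then 1 else 0 :: real)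
          = (\<Prod>p\<in>OD I. f p (y p))"
      proof (rule prod.cong[OF refl])
        fix p assume p: "p \<in> OD I"
        then have "fst p \<in> I" "snd p \<in> I" unfolding OD_def by auto
        then show "(if hp (merge Dg Rst (x, y)) p \<le> merge Dg Rst (x, y) p then 1 else 0 :: real) = f p (y p)"
          using p mgD mgR unfolding f_def hp_def by simp
      qed
      also have "\<dots> = (\<Prod>p\<in>Rst. f p (y p))"
        by (rule prod.mono_neutral_left[OF DgR(4) ODR]) (auto simp: f_def)
      finally show ?thesis unfolding R_def GM by simp
    qed
    have fnn: "0 \<le> f p u" for p u unfolding f_def by auto
    have fmeas: "(\<lambda>u. ennreal (f p u)) \<in> borel_measurable \<mu>" for p
      unfolding f_def by (simp add: measurable_cong_sets[OF sets_mu refl])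
    show ?thesis
    proof (cases "G x = 0")
      case True
      then show ?thesis unfolding eqR by simp
    next
      case False
      then have xin: "x (j,j) \<in> {0..1}" if "j \<in> I" for j
        unfolding G_def using that fin by (auto simp: indicator_def split: if_splits)
      have "(\<integral>\<^sup>+y. ennreal (R (merge Dg Rst (x, y))) \<partial>PiM Rst (\<lambda>_. \<mu>))
          = (\<integral>\<^sup>+y. ennreal (G x) * (\<Prod>p\<in>Rst. ennreal (f p (y p))) \<partial>PiM Rst (\<lambda>_. \<mu>))"
        unfolding eqR using Gnn fnn by (simp add: ennreal_mult prod_ennreal prod_nonneg)
      also have "\<dots> = ennreal (G x) * (\<integral>\<^sup>+y. (\<Prod>p\<in>Rst. ennreal (f p (y p))) \<partial>PiM Rst (\<lambda>_. \<mu>))"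
      proof (rule nn_integral_cmult)
        show "(\<lambda>y. \<Prod>p\<in>Rst. ennreal (f p (y p))) \<in> borel_measurable (PiM Rst (\<lambda>_. \<mu>))"
          by (intro borel_measurable_prod_ennreal measurable_compose[OF _ fmeas]
               measurable_component_singleton)
      qed
      also have "\<dots> = ennreal (G x) * (\<Prod>p\<in>Rst. (\<integral>\<^sup>+u. ennreal (f p u) \<partial>\<mu>))"
        using PS.product_nn_integral_prod[OF DgR(4), of "\<lambda>p u. ennreal (f p u)"] fmeas by simp
      also have "\<dots> = ennreal (G x) * (\<Prod>p\<in>Rst. ennreal (if p \<in> OD I then 1 - F (hp x p) else 1))"
      proof -
        have "(\<integral>\<^sup>+u. ennreal (f p u) \<partial>\<mu>) = ennreal (if p \<in> OD I then 1 - F (hp x p) else 1)" for p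
        proof (cases "p \<in> OD I")
          case True
          then have "fst p \<in> I" "snd p \<in> I" unfolding OD_def by auto
          then have h01: "hp x p \<in> {0..1}" using xin[OF \<open>fst p \<in> I\<close>] xin[OF \<open>snd p \<in> I\<close>] unfolding hp_def by auto
          have "(\<integral>\<^sup>+u. ennreal (f p u) \<partial>\<mu>) = (\<integral>\<^sup>+u. indicator {hp x p..} u \<partial>\<mu>)"
            using True by (intro nn_integral_cong) (auto simp: f_def indicator_def)
          also have "\<dots> = emeasure \<mu> {hp x p..}" by simp
          finally show ?thesis using True emeasure_ge[OF h01] by simp
        next
          case False
          then show ?thesis using prob_space.emeasure_space_1[OF prob_mu] by (simp add: f_def)
        qed
        then show ?thesis by simp
      qed
      also have "\<dots> = ennreal (G x * (\<Prod>p\<in>Rst. if p \<in> OD I then 1 - F (hp x p) else 1))"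
      proof -
        have "0 \<le> 1 - F (hp x p)" if "p \<in> OD I" for p
        proof -
          have "fst p \<in> I" "snd p \<in> I" using that unfolding OD_def by auto
          then have "hp x p \<in> {0..1}" using xin[OF \<open>fst p \<in> I\<close>] xin[OF \<open>snd p \<in> I\<close>] unfolding hp_def by auto
          then show ?thesis using F_range by auto
        qed
        then show ?thesis using Gnn by (simp add: ennreal_mult prod_ennreal prod_nonneg)
      qed
      also have "\<dots> \<le> ennreal (Q x)"
      proof (rule ennreal_leI)
        have "(\<Prod>p\<in>Rst. if p \<in> OD I then 1 - F (hp x p) else 1) = (\<Prod>p\<in>OD I. 1 - F (hp x p))"
          by (subst prod.mono_neutral_left[OF DgR(4) ODR, symmetric]) auto
        also have "\<dots> \<le> (\<Prod>p\<in>OD I. exp (- (F' (x (fst p, fst p)) + F' (x (snd p, snd p))) / 2))"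
        proof (rule prod_mono)
          fix p assume p: "p \<in> OD I"
          then have "fst p \<in> I" "snd p \<in> I" unfolding OD_def by auto
          then have a: "x (fst p, fst p) \<in> {0..1}" "x (snd p, snd p) \<in> {0..1}" using xin by auto
          then have "hp x p \<in> {0..1}" unfolding hp_def by auto
          then have "0 \<le> 1 - F (hp x p)" using F_range by auto
          moreover have "1 - F (hp x p) \<le> exp (- (F' (x (fst p, fst p)) + F' (x (snd p, snd p))) / 2)"
            using emeasure_ge_le[OF a] a unfolding hp_def F'_def by (simp add: clamp_id)
          ultimately show "0 \<le> 1 - F (hp x p) \<and> 1 - F (hp x p) \<le> exp (- (F' (x (fst p, fst p)) + F' (x (snd p, snd p))) / 2)" by simp
        qed
        finally show "G x * (\<Prod>p\<in>Rst. if p \<in> OD I then 1 - F (hp x p) else 1) \<le> Q x"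
          unfolding Q_def using Gnn by (intro mult_left_mono) auto
      qed
      finally show ?thesis .
    qed
  qed
  define mq where "mq j = lam + t * c - (if j = i then t else 0)" for j
  have mqpos: "0 < mq j" for j using mi t unfolding mq_def by auto
  define \<psi> where "\<psi> q u = indicator {0..1} u * exp (- mq (fst q) * F' u)" for q :: "nat \<times> nat" and u :: real
  have \<psi>nn: "0 \<le> \<psi> q u" for q u unfolding \<psi>_def by auto
  have injD: "inj_on (\<lambda>j. (j,j)) I" by (auto simp: inj_on_def)
  have Qeq: "Q x = (\<Prod>q\<in>Dg. \<psi> q (x q))" for x
  proof -
    define a where "a j = F' (x (j,j))" for j
    have e1: "(\<Sum>p\<in>OD I. - (a (fst p) + a (snd p)) / 2) = - lam * S x"
    proof -
      have "(\<Sum>p\<in>OD I. - (a (fst p) + a (snd p)) / 2) = - (\<Sum>p\<in>OD I. a (fst p) + a (snd p)) / 2"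
        by (simp add: sum_divide_distrib[symmetric] sum.distrib sum_subtractf sum_negf)
      also have "\<dots> = - lam * S x" using sum_OD[OF fin, of a] unfolding OD_def lam S_def a_def by simp
      finally show ?thesis .
    qed
    have e2: "(\<Sum>j\<in>I. - mq j * a j) = - (lam + t * c) * S x + t * a i"
    proof -
      have "(\<Sum>j\<in>I. - mq j * a j) = (\<Sum>j\<in>I. - (lam + t * c) * a j + (if j = i then t * a j else 0))"
        unfolding mq_def by (intro sum.cong) (auto simp: algebra_simps)
      also have "\<dots> = - (lam + t * c) * S x + t * a i"
        using i fin by (simp add: sum.distrib sum_distrib_left[symmetric] S_def a_def)
      finally show ?thesis .
    qed
    have "(\<Prod>q\<in>Dg. \<psi> q (x q)) = (\<Prod>j\<in>I. \<psi> (j,j) (x (j,j)))"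
      unfolding Dg_def by (simp add: prod.reindex[OF injD])
    also have "\<dots> = (\<Prod>j\<in>I. indicator {0..1} (x (j,j))) * exp (\<Sum>j\<in>I. - mq j * a j)"
      unfolding \<psi>_def a_def by (simp add: prod.distrib exp_sum[OF fin])
    also have "\<dots> = Q x"
    proof -
      have pe: "(\<Prod>p\<in>OD I. exp (- (F' (x (fst p, fst p)) + F' (x (snd p, snd p))) / 2)) = exp (- lam * S x)"
        using e1 exp_sum[OF finOD, of "\<lambda>p. - (a (fst p) + a (snd p)) / 2"] unfolding a_def by simp
      have ee: "exp (- (lam + t * c) * S x + t * a i) = exp (t * (F' (x (i,i)) - c * S x)) * exp (- lam * S x)"
        by (simp add: exp_add[symmetric] a_def algebra_simps)
      show ?thesis unfolding Q_def G_def e2 pe ee by (simp add: mult.assoc)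
    qed
    finally show ?thesis by simp
  qed
  have step4: "(\<integral>\<^sup>+x. ennreal (Q x) \<partial>PiM Dg (\<lambda>_. \<mu>)) = ennreal (\<Prod>j\<in>I. (1 - exp (- mq j)) / mq j)"
  proof -
    have pm: "(\<lambda>u. ennreal (\<psi> q u)) \<in> borel_measurable \<mu>" for q
      unfolding \<psi>_def by (simp add: measurable_cong_sets[OF sets_mu refl])
    have "(\<integral>\<^sup>+x. ennreal (Q x) \<partial>PiM Dg (\<lambda>_. \<mu>)) = (\<integral>\<^sup>+x. (\<Prod>q\<in>Dg. ennreal (\<psi> q (x q))) \<partial>PiM Dg (\<lambda>_. \<mu>))"
      unfolding Qeq using \<psi>nn by (simp add: prod_ennreal)
    also have "\<dots> = (\<Prod>q\<in>Dg. (\<integral>\<^sup>+u. ennreal (\<psi> q u) \<partial>\<mu>))"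
      using PS.product_nn_integral_prod[OF DgR(3), of "\<lambda>q u. ennreal (\<psi> q u)"] pm by simp
    also have "\<dots> = (\<Prod>q\<in>Dg. ennreal ((1 - exp (- mq (fst q))) / mq (fst q)))"
      unfolding \<psi>_def using exp_int[OF mqpos] by simp
    also have "\<dots> = ennreal (\<Prod>q\<in>Dg. (1 - exp (- mq (fst q))) / mq (fst q))"
      using mqpos by (intro prod_ennreal) (simp add: less_imp_le)
    also have "\<dots> = ennreal (\<Prod>j\<in>I. (1 - exp (- mq j)) / mq j)"
      unfolding Dg_def by (simp add: prod.reindex[OF injD])
    finally show ?thesis .
  qed
  have step5: "(\<Prod>j\<in>I. (1 - exp (- mq j)) / mq j) \<le> 1 / (lam + t * c - t) * (1 / (lam + t * c)) ^ (card I - 1)"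
  proof -
    have "(\<Prod>j\<in>I. (1 - exp (- mq j)) / mq j) \<le> (\<Prod>j\<in>I. 1 / mq j)"
      using mqpos by (intro prod_mono) (auto simp: divide_right_mono less_imp_le)
    also have "\<dots> = 1 / mq i * (\<Prod>j\<in>I - {i}. 1 / mq j)" by (subst prod.remove[OF fin i]) simp
    also have "(\<Prod>j\<in>I - {i}. 1 / mq j) = (\<Prod>j\<in>I - {i}. 1 / (lam + t * c))"
      unfolding mq_def by (intro prod.cong) auto
    also have "\<dots> = (1 / (lam + t * c)) ^ (card I - 1)" using fin i by (simp add: card_Diff_singleton)
    finally show ?thesis unfolding mq_def by simp
  qed
  have "emeasure (MM n) (Aev n I c i) \<le> (\<integral>\<^sup>+x. ennreal (Q x) \<partial>PiM Dg (\<lambda>_. \<mu>))"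
    using step1 unfolding step2 using step3 by (meson dual_order.trans nn_integral_mono)
  also have "\<dots> \<le> ennreal (1 / (lam + t * c - t) * (1 / (lam + t * c)) ^ (card I - 1))"
    unfolding step4 using step5 by (rule ennreal_leI)
  finally show ?thesis .
qed

end

lemma lemB:
  assumes r: "r \<ge> (2::nat)"
  shows "(2 / (real r - 1)) ^ r \<le> exp 2 * (2 / real r) ^ r"
proof -
  define x where "x = real r"
  have x2: "x \<ge> 2" using r unfolding x_def by simp
  have e: "2 / (x - 1) = 2 / x * (x / (x - 1))" using x2 by (simp add: field_simps)
  have "x / (x - 1) = 1 + 1 / (x - 1)" using x2 by (simp add: field_simps)
  also have "\<dots> \<le> exp (1 / (x - 1))" using exp_ge_add_one_self[of "1 / (x - 1)"] by simp
  finally have b: "x / (x - 1) \<le> exp (1 / (x - 1))" .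
  have "(x / (x - 1)) ^ r \<le> exp (1 / (x - 1)) ^ r"
    by (rule power_mono[OF b]) (use x2 in simp)
  also have "\<dots> = exp (real r * (1 / (x - 1)))" using exp_of_nat_mult[of r "1 / (x - 1)"] by simp
  also have "\<dots> \<le> exp 2" using x2 unfolding x_def[symmetric] by (simp add: field_simps)
  finally have "(x / (x - 1)) ^ r \<le> exp 2" .
  then have "(2 / x) ^ r * (x / (x - 1)) ^ r \<le> (2 / x) ^ r * exp 2"
    by (rule mult_left_mono) (use x2 in simp)
  then show ?thesis unfolding x_def[symmetric] e power_mult_distrib by (simp add: mult.commute)
qed

lemma lemC:
  fixes c \<epsilon> :: real
  assumes "0 \<le> c" "c \<le> 1/2" "0 \<le> \<epsilon>" "\<epsilon> \<le> 1"
  shows "(1 - c) / (1 - c * \<epsilon>) \<le> exp (- c * (1 - 2 * \<epsilon>))"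
proof -
  have "c * \<epsilon> \<le> c" using mult_left_le[of \<epsilon> c] assms by simp
  then have ce: "0 \<le> c * \<epsilon>" "c * \<epsilon> \<le> 1/2" using assms by auto
  have "- (c * \<epsilon>) - 2 * (c * \<epsilon>)\<^sup>2 \<le> ln (1 - c * \<epsilon>)" by (rule ln_one_minus_pos_lower_bound[OF ce])
  moreover have "- 2 * (c * \<epsilon>) \<le> - (c * \<epsilon>) - 2 * (c * \<epsilon>)\<^sup>2"
  proof -
    have "(c * \<epsilon>) * (2 * (c * \<epsilon>)) \<le> (c * \<epsilon>) * 1"
      by (rule mult_left_mono) (use ce in auto)
    then show ?thesis by (simp add: power2_eq_square algebra_simps)
  qed
  ultimately have "- 2 * (c * \<epsilon>) \<le> ln (1 - c * \<epsilon>)" by linarith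
  then have "exp (- 2 * (c * \<epsilon>)) \<le> exp (ln (1 - c * \<epsilon>))" by (simp only: exp_le_cancel_iff)
  also have "\<dots> = 1 - c * \<epsilon>" using ce by simp
  finally have l: "exp (- 2 * (c * \<epsilon>)) \<le> 1 - c * \<epsilon>" .
  have u: "1 - c \<le> exp (- c)" using exp_ge_add_one_self[of "-c"] by simp
  have "(1 - c) / (1 - c * \<epsilon>) \<le> exp (- c) / exp (- 2 * (c * \<epsilon>))"
    by (rule frac_le) (use u l assms in auto)
  also have "\<dots> = exp (- c * (1 - 2 * \<epsilon>))" by (simp add: exp_diff[symmetric] algebra_simps)
  finally show ?thesis .
qed

lemma ln_le_sqrt: "x > 0 \<Longrightarrow> ln x \<le> 2 * sqrt x"
proof -
  assume x: "x > 0"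
  have "ln (sqrt x) \<le> sqrt x - 1" using ln_le_minus_one[of "sqrt x"] x by simp
  moreover have "ln x = 2 * ln (sqrt x)" using x by (simp add: ln_sqrt)
  ultimately show ?thesis by simp
qed

lemma asym:
  fixes k \<alpha> :: real
  assumes k: "k > 1" and \<alpha>: "\<alpha> < k - 1"
  shows "\<exists>\<epsilon>>0. \<epsilon> \<le> 1/4 \<and> (\<exists>R::nat. \<forall>r\<ge>R. r \<ge> 2 \<and> 0 \<le> k * ln (real r) / real r \<and> k * ln (real r) / real r \<le> 1/2 \<and>
     real r * ((1 / ((real r - 1) / 2)) ^ r * (1 / \<epsilon>) *
       ((1 - k * ln (real r) / real r) / (1 - k * ln (real r) / real r * \<epsilon>)) ^ (r - 1))
     \<le> (2 / real r) ^ r * real r powr (- \<alpha>))"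
proof -
  define \<epsilon> where "\<epsilon> = min (1/4) ((k - 1 - \<alpha>) / (4 * k))"
  define \<delta> where "\<delta> = (k - 1 - \<alpha>) / 2"
  define K where "K = exp (2 + k) / \<epsilon>"
  have \<epsilon>: "0 < \<epsilon>" "\<epsilon> \<le> 1/4" "\<epsilon> \<le> (k - 1 - \<alpha>) / (4 * k)" using k \<alpha> unfolding \<epsilon>_def by auto
  have \<delta>: "0 < \<delta>" using \<alpha> unfolding \<delta>_def by simp
  have K: "0 < K" using \<epsilon> unfolding K_def by simp
  define R where "R = max 2 (max (nat \<lceil>16 * k\<^sup>2\<rceil>) (nat \<lceil>K powr (1 / \<delta>)\<rceil>))"
  have main: "r \<ge> 2 \<and> 0 \<le> k * ln (real r) / real r \<and> k * ln (real r) / real r \<le> 1/2 \<and>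
     real r * ((1 / ((real r - 1) / 2)) ^ r * (1 / \<epsilon>) *
       ((1 - k * ln (real r) / real r) / (1 - k * ln (real r) / real r * \<epsilon>)) ^ (r - 1))
     \<le> (2 / real r) ^ r * real r powr (- \<alpha>)" if rR: "r \<ge> R" for r
  proof -
    define x where "x = real r"
    define c where "c = k * ln x / x"
    have r2: "r \<ge> 2" using rR unfolding R_def by simp
    have x2: "x \<ge> 2" using r2 unfolding x_def by simp
    have x16: "x \<ge> 16 * k\<^sup>2" using rR unfolding R_def x_def by linarith
    have xK: "x \<ge> K powr (1 / \<delta>)" using rR unfolding R_def x_def by linarith
    have c0: "0 \<le> c" unfolding c_def using k x2 by simp
    have c12: "c \<le> 1/2"
    proof -
      have "sqrt x \<ge> sqrt (16 * k\<^sup>2)" using x16 by simp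
      then have sx: "sqrt x \<ge> 4 * k" using k by (simp add: real_sqrt_mult)
      have "c \<le> k * (2 * sqrt x) / x" unfolding c_def using ln_le_sqrt[of x] x2 k
        by (intro divide_right_mono mult_left_mono) auto
      also have "\<dots> = 2 * k / sqrt x" using x2 by (simp add: field_simps)
      also have "\<dots> \<le> 2 * k / (4 * k)" using sx k x2 by (intro divide_left_mono) (auto intro!: mult_pos_pos)
      also have "\<dots> = 1/2" using k by simp
      finally show ?thesis .
    qed
    define q where "q = (1 - c) / (1 - c * \<epsilon>)"
    have "c * \<epsilon> \<le> c" using mult_left_le[of \<epsilon> c] \<epsilon> c0 by simp
    then have ce1: "c * \<epsilon> < 1" using c12 by simp
    have q0: "0 \<le> q" unfolding q_def using c12 ce1 by simp
    have A: "(1 / ((x - 1) / 2)) ^ r \<le> exp 2 * (2 / x) ^ r"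
      using lemB[OF r2] unfolding x_def by simp
    have B1: "q ^ (r - 1) \<le> exp (- c * (1 - 2 * \<epsilon>)) ^ (r - 1)"
      unfolding q_def by (rule power_mono[OF lemC]) (use c0 c12 \<epsilon> q0 q_def in auto)
    have B2: "exp (- c * (1 - 2 * \<epsilon>)) ^ (r - 1) = exp (- (real (r - 1) * c * (1 - 2 * \<epsilon>)))"
      using exp_of_nat_mult[of "r - 1" "- c * (1 - 2 * \<epsilon>)"] by (simp add: mult.assoc)
    have lnx: "ln x / x \<le> 1" using ln_le_minus_one[of x] x2 by simp
    have B3: "real (r - 1) * c \<ge> k * ln x - k"
    proof -
      have "real (r - 1) * c = k * ln x - k * (ln x / x)" unfolding c_def x_def using r2 by (simp add: of_nat_diff field_simps)
      moreover have "k * (ln x / x) \<le> k" using mult_left_mono[OF lnx, of k] k by simp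
      ultimately show ?thesis by simp
    qed
    have B4: "exp (- (real (r - 1) * c * (1 - 2 * \<epsilon>))) \<le> exp k * x powr (- ((1 - 2 * \<epsilon>) * k))"
    proof -
      have "- (real (r - 1) * c * (1 - 2 * \<epsilon>)) \<le> - ((k * ln x - k) * (1 - 2 * \<epsilon>))"
        using B3 \<epsilon> by (intro le_imp_neg_le mult_right_mono) auto
      also have "\<dots> \<le> k + (- ((1 - 2 * \<epsilon>) * k)) * ln x"
      proof -
        have "(1 - 2 * \<epsilon>) * k \<le> k" using \<epsilon> k by (simp add: mult_left_le_one_le)
        then show ?thesis by (simp add: algebra_simps)
      qed
      finally have "exp (- (real (r - 1) * c * (1 - 2 * \<epsilon>))) \<le> exp (k + (- ((1 - 2 * \<epsilon>) * k)) * ln x)" by simp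
      also have "\<dots> = exp k * x powr (- ((1 - 2 * \<epsilon>) * k))" using x2 by (simp add: exp_add[symmetric] powr_def)
      finally show ?thesis .
    qed
    have Q: "q ^ (r - 1) \<le> exp k * x powr (- ((1 - 2 * \<epsilon>) * k))" using B1 B2 B4 by simp
    have expo: "1 - (1 - 2 * \<epsilon>) * k \<le> - \<alpha> - \<delta>"
    proof -
      have "2 * \<epsilon> * k \<le> 2 * ((k - 1 - \<alpha>) / (4 * k)) * k" 
      proof (rule mult_right_mono)
        show "2 * \<epsilon> \<le> 2 * ((k - 1 - \<alpha>) / (4 * k))" using \<epsilon>(3) by linarith
      qed (use k in simp)
      also have "\<dots> = (k - 1 - \<alpha>) / 2" using k by (simp add: field_simps)
      finally have h: "2 * \<epsilon> * k \<le> (k - 1 - \<alpha>) / 2" .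
      have "1 - (1 - 2 * \<epsilon>) * k = 1 - k + 2 * \<epsilon> * k" by (simp add: algebra_simps)
      also have "\<dots> \<le> 1 - k + (k - 1 - \<alpha>) / 2" using h by simp
      also have "\<dots> = - \<alpha> - \<delta>" unfolding \<delta>_def by (simp add: field_simps)
      finally show ?thesis .
    qed
    have Kx: "K \<le> x powr \<delta>"
    proof -
      have "K = (K powr (1 / \<delta>)) powr \<delta>" using K \<delta> by (simp add: powr_powr)
      also have "\<dots> \<le> x powr \<delta>" using xK \<delta> K by (intro powr_mono2) auto
      finally show ?thesis .
    qed
    have "x * ((1 / ((x - 1) / 2)) ^ r * (1 / \<epsilon>) * q ^ (r - 1))
        \<le> x * ((exp 2 * (2 / x) ^ r) * (1 / \<epsilon>) * (exp k * x powr (- ((1 - 2 * \<epsilon>) * k))))"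
      using A Q x2 \<epsilon> q0 by (intro mult_left_mono mult_mono) auto
    also have "\<dots> = (2 / x) ^ r * K * (x * x powr (- ((1 - 2 * \<epsilon>) * k)))"
      using x2 \<epsilon> unfolding K_def by (simp add: exp_add field_simps)
    also have "\<dots> = (2 / x) ^ r * K * x powr (1 - (1 - 2 * \<epsilon>) * k)"
      using x2 powr_add[of x 1 "- ((1 - 2 * \<epsilon>) * k)"] by simp
    also have "\<dots> \<le> (2 / x) ^ r * K * x powr (- \<alpha> - \<delta>)"
      using expo x2 K by (intro mult_left_mono powr_mono) auto
    also have "\<dots> = (2 / x) ^ r * x powr (- \<alpha>) * (K * x powr (- \<delta>))"
      using x2 by (simp add: powr_add[symmetric] algebra_simps)
    also have "\<dots> \<le> (2 / x) ^ r * x powr (- \<alpha>) * 1"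
    proof (rule mult_left_mono)
      have "K * x powr (- \<delta>) \<le> x powr \<delta> * x powr (- \<delta>)" using Kx x2 by (intro mult_right_mono) auto
      also have "\<dots> = 1" using x2 by (simp add: powr_add[symmetric])
      finally show "K * x powr (- \<delta>) \<le> 1" .
    qed (use x2 in simp)
    finally show ?thesis using r2 c0 c12 unfolding x_def[symmetric] c_def[symmetric] q_def by simp
  qed
  show ?thesis using \<epsilon> main by blast
qed

context setting begin

lemma in_C1_F': "in_C1 F I x = in_C1 F' I x"
proof (cases "\<forall>i\<in>I. x i \<in> {0..1}")
  case True
  then have "(\<Sum>i\<in>I. F (x i)) = (\<Sum>i\<in>I. F' (x i))" by (intro sum.cong) (auto simp: F'_def clamp_id)
  then show ?thesis unfolding in_C1_def by simp
qed (auto simp: in_C1_def)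

lemma in_C2_F': "in_C2 F k I x = in_C2 F' k I x"
proof (cases "\<forall>i\<in>I. x i \<in> {0..1}")
  case True
  then have "(\<Sum>i\<in>I. F (x i)) = (\<Sum>i\<in>I. F' (x i))" by (intro sum.cong) (auto simp: F'_def clamp_id)
  moreover have "\<forall>i\<in>I. F (x i) = F' (x i)" using True by (auto simp: F'_def clamp_id)
  ultimately show ?thesis unfolding in_C2_def in_C1_F' by simp
qed (auto simp: in_C2_def in_C1_def)

lemma XY_meas:
  assumes fin: "finite I"
  shows "event_D n g I \<inter> {\<omega> \<in> space (weight_space n g). in_C1 F I (\<lambda>i. fval \<omega> i i)} \<in> sets (MM n)"
    and "event_D n g I \<inter> {\<omega> \<in> space (weight_space n g). in_C2 F k I (\<lambda>i. fval \<omega> i i)} \<in> sets (MM n)"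
proof -
  note fin[measurable]
  define P1 where "P1 \<omega> = (\<forall>i\<in>I. \<forall>j\<in>I. i \<noteq> j \<longrightarrow> (\<omega> (i,i) + \<omega> (j,j)) / 2 \<le> \<omega> (min i j, max i j))" for \<omega> :: "nat \<times> nat \<Rightarrow> real"
  define P2 where "P2 \<omega> = (\<forall>i\<in>I. 0 \<le> \<omega> (i,i) \<and> \<omega> (i,i) \<le> 1)" for \<omega> :: "nat \<times> nat \<Rightarrow> real"
  define P3 where "P3 \<omega> = (\<bar>(\<Sum>i\<in>I. F' (\<omega> (i,i))) - 2\<bar> \<le> real (card I) powr (- 1 / 3))" for \<omega> :: "nat \<times> nat \<Rightarrow> real"
  define P4 where "P4 \<omega> = (\<forall>i\<in>I. F' (\<omega> (i,i)) / (\<Sum>j\<in>I. F' (\<omega> (j,j))) \<le> k * ln (real (card I)) / real (card I))" for \<omega> :: "nat \<times> nat \<Rightarrow> real"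
  have m1: "Measurable.pred (MM n) P1" unfolding P1_def by measurable
  have m2: "Measurable.pred (MM n) P2" unfolding P2_def by measurable
  have m3: "Measurable.pred (MM n) P3" unfolding P3_def by measurable
  have m4: "Measurable.pred (MM n) P4" unfolding P4_def by measurable
  have c1: "in_C1 F I (\<lambda>i. fval \<omega> i i) \<longleftrightarrow> P2 \<omega> \<and> P3 \<omega>" for \<omega>
  proof -
    have fv: "(\<lambda>i. fval \<omega> i i) = (\<lambda>i. \<omega> (i,i))" by (simp add: fval_def)
    show ?thesis unfolding fv by (subst in_C1_F') (auto simp: in_C1_def P2_def P3_def)
  qed
  have c2: "in_C2 F k I (\<lambda>i. fval \<omega> i i) \<longleftrightarrow> (P2 \<omega> \<and> P3 \<omega>) \<and> P4 \<omega>" for \<omega>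
  proof -
    have fv: "(\<lambda>i. fval \<omega> i i) = (\<lambda>i. \<omega> (i,i))" by (simp add: fval_def)
    show ?thesis unfolding fv by (subst in_C2_F') (auto simp: in_C2_def in_C1_def P2_def P3_def P4_def)
  qed
  have d: "event_D n g I = {\<omega> \<in> space (MM n). P1 \<omega>}"
    unfolding weight_space_eq event_D_def fval_def P1_def by auto
  have eX: "event_D n g I \<inter> {\<omega> \<in> space (weight_space n g). in_C1 F I (\<lambda>i. fval \<omega> i i)} = {\<omega> \<in> space (MM n). P1 \<omega> \<and> (P2 \<omega> \<and> P3 \<omega>)}"
    unfolding d c1 weight_space_eq by auto
  have eY: "event_D n g I \<inter> {\<omega> \<in> space (weight_space n g). in_C2 F k I (\<lambda>i. fval \<omega> i i)} = {\<omega> \<in> space (MM n). P1 \<omega> \<and> ((P2 \<omega> \<and> P3 \<omega>) \<and> P4 \<omega>)}"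
    unfolding d c2 weight_space_eq by auto
  have "Measurable.pred (MM n) (\<lambda>\<omega>. P1 \<omega> \<and> (P2 \<omega> \<and> P3 \<omega>))"
    using m1 m2 m3 by (intro pred_intros_logic)
  then show "event_D n g I \<inter> {\<omega> \<in> space (weight_space n g). in_C1 F I (\<lambda>i. fval \<omega> i i)} \<in> sets (MM n)"
    unfolding eX pred_def .
  have "Measurable.pred (MM n) (\<lambda>\<omega>. P1 \<omega> \<and> ((P2 \<omega> \<and> P3 \<omega>) \<and> P4 \<omega>))"
    using m1 m2 m3 m4 by (intro pred_intros_logic)
  then show "event_D n g I \<inter> {\<omega> \<in> space (weight_space n g). in_C2 F k I (\<lambda>i. fval \<omega> i i)} \<in> sets (MM n)"
    unfolding eY pred_def .
qed

lemma final:
  assumes k: "k > 1" and \<alpha>: "\<alpha> < k - 1"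
  shows "\<exists>R::nat. \<forall>r\<ge>R. \<forall>(n::nat) (I::nat set). I \<subseteq> {0..<n} \<and> card I = r \<longrightarrow>
           prob_C n g I (in_C1 F I) - prob_C n g I (in_C2 F k I)
             \<le> (2 / real r) ^ r * real r powr (-\<alpha>)"
proof -
  obtain \<epsilon> R where \<epsilon>: "0 < \<epsilon>" "\<epsilon> \<le> 1/4" and R: "\<forall>r\<ge>R. r \<ge> 2 \<and> 0 \<le> k * ln (real r) / real r \<and> k * ln (real r) / real r \<le> 1/2 \<and>
     real r * ((1 / ((real r - 1) / 2)) ^ r * (1 / \<epsilon>) *
       ((1 - k * ln (real r) / real r) / (1 - k * ln (real r) / real r * \<epsilon>)) ^ (r - 1))
     \<le> (2 / real r) ^ r * real r powr (- \<alpha>)"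
    using asym[OF k \<alpha>] by blast
  show ?thesis
  proof (intro exI[of _ R] allI impI)
    fix r n :: nat and I :: "nat set" assume rR: "R \<le> r" and nI: "I \<subseteq> {0..<n} \<and> card I = r"
    define c where "c = k * ln (real r) / real r"
    have r2: "r \<ge> 2" and c0: "0 \<le> c" and c12: "c \<le> 1/2"
      and ineq: "real r * ((1 / ((real r - 1) / 2)) ^ r * (1 / \<epsilon>) * ((1 - c) / (1 - c * \<epsilon>)) ^ (r - 1))
          \<le> (2 / real r) ^ r * real r powr (- \<alpha>)"
      using R rR unfolding c_def by auto
    have In: "I \<subseteq> {0..<n}" and cI: "card I = r" using nI by auto
    have fin: "finite I" using cI r2 card.infinite by force
    define lam where "lam = (real (card I) - 1) / 2"
    have lam: "lam \<ge> 1/2" unfolding lam_def using cI r2 by simp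
    define t where "t = lam * (1 - \<epsilon>) / (1 - c)"
    have t0: "0 \<le> t" unfolding t_def using lam \<epsilon> c12 by simp
    have c1: "1 - c \<noteq> 0" using c12 by simp
    have tc: "t * (1 - c) = lam * (1 - \<epsilon>)" unfolding t_def using c1 by simp
    have "lam + t * c - t = lam - t * (1 - c)" by (simp add: algebra_simps)
    also have "\<dots> = lam * \<epsilon>" unfolding tc by (simp add: algebra_simps)
    finally have e1: "lam + t * c - t = lam * \<epsilon>" .
    have "(lam + t * c) * (1 - c) = lam * (1 - c) + c * (t * (1 - c))" by (simp add: algebra_simps)
    also have "\<dots> = lam * (1 - c * \<epsilon>)" unfolding tc by (simp add: algebra_simps)
    finally have "(lam + t * c) * (1 - c) = lam * (1 - c * \<epsilon>)" .
    then have e2: "lam + t * c = lam * ((1 - c * \<epsilon>) / (1 - c))" using c1 by (simp add: eq_divide_eq)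
    have mi: "0 < lam + t * c - t" unfolding e1 using lam \<epsilon> by simp
    define B where "B = 1 / (lam + t * c - t) * (1 / (lam + t * c)) ^ (card I - 1)"
    have B0: "0 \<le> B" unfolding B_def using mi t0 c0 by simp
    have Bform: "B = (1 / ((real r - 1) / 2)) ^ r * (1 / \<epsilon>) * ((1 - c) / (1 - c * \<epsilon>)) ^ (r - 1)"
    proof -
      have h2: "1 / (lam + t * c) = (1 / lam) * ((1 - c) / (1 - c * \<epsilon>))" unfolding e2 by simp
      have h1: "1 / (lam * \<epsilon>) = (1 / lam) * (1 / \<epsilon>)" by simp
      have "B = (1 / lam) * (1 / \<epsilon>) * ((1 / lam) * ((1 - c) / (1 - c * \<epsilon>))) ^ (r - 1)"
        unfolding B_def e1 cI h1 h2 ..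
      also have "\<dots> = (1 / lam) ^ Suc (r - 1) * (1 / \<epsilon>) * ((1 - c) / (1 - c * \<epsilon>)) ^ (r - 1)"
        by (simp only: power_mult_distrib power_Suc ac_simps)
      also have "Suc (r - 1) = r" using r2 by simp
      finally show ?thesis unfolding lam_def cI .
    qed
    interpret M: prob_space "MM n" by (rule prob_space_PiM) (rule prob_mu)
    define X where "X = event_D n g I \<inter> {\<omega> \<in> space (weight_space n g). in_C1 F I (\<lambda>i. fval \<omega> i i)}"
    define Y where "Y = event_D n g I \<inter> {\<omega> \<in> space (weight_space n g). in_C2 F k I (\<lambda>i. fval \<omega> i i)}"
    have XY: "X \<in> sets (MM n)" "Y \<in> sets (MM n)" unfolding X_def Y_def using XY_meas[OF fin] by auto
    have YX: "Y \<subseteq> X" unfolding X_def Y_def in_C2_def by auto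
    have Aev_s: "Aev n I c i \<in> sets (MM n)" for i using Aev_meas[OF fin] .
    have sub: "X - Y \<subseteq> (\<Union>i\<in>I. Aev n I c i)"
    proof
      fix \<omega> assume w: "\<omega> \<in> X - Y"
      define x where "x i = fval \<omega> i i" for i
      have xi: "x i = \<omega> (i,i)" for i unfolding x_def fval_def by simp
      have ws: "\<omega> \<in> space (MM n)" and D: "\<omega> \<in> event_D n g I" and C1: "in_C1 F I x" and nC2: "\<not> in_C2 F k I x"
        using w unfolding X_def Y_def x_def weight_space_eq by (auto simp: fun_eq_iff)
      have x01: "\<forall>j\<in>I. x j \<in> {0..1}" using C1 unfolding in_C1_def by simp
      have "\<bar>(\<Sum>j\<in>I. F (x j)) - 2\<bar> \<le> real (card I) powr (- 1 / 3)" using C1 unfolding in_C1_def by simp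
      moreover have "real (card I) powr (- 1 / 3) \<le> 1"
      proof -
        have "1 \<le> real (card I) powr (1 / 3)" using cI r2 by (intro ge_one_powr_ge_zero) auto
        then show ?thesis by (simp add: powr_minus_divide divide_le_eq_1; linarith)
      qed
      ultimately have S1: "(\<Sum>j\<in>I. F (x j)) \<ge> 1" by linarith
      obtain i where i: "i \<in> I" and gi: "\<not> F (x i) / (\<Sum>j\<in>I. F (x j)) \<le> c"
        using nC2 C1 unfolding in_C2_def c_def cI by auto
      have "c * (\<Sum>j\<in>I. F (x j)) < F (x i)" using gi S1 by (simp add: not_le less_divide_eq)
      moreover have "(\<Sum>j\<in>I. F (x j)) = (\<Sum>j\<in>I. F' (\<omega> (j,j)))"
        using x01 by (intro sum.cong) (auto simp: F'_def clamp_id xi)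
      moreover have "F (x i) = F' (\<omega> (i,i))" using x01 i by (auto simp: F'_def clamp_id xi)
      ultimately have cond: "c * (\<Sum>j\<in>I. F' (\<omega> (j,j))) \<le> F' (\<omega> (i,i))" by simp
      have od: "\<forall>p\<in>OD I. (\<omega> (fst p, fst p) + \<omega> (snd p, snd p)) / 2 \<le> \<omega> p"
      proof
        fix p assume p: "p \<in> OD I"
        then obtain j l where pj: "p = (j,l)" "j \<in> I" "l \<in> I" "j < l" unfolding OD_def by auto
        then have "(fval \<omega> j j + fval \<omega> l l) / 2 \<le> fval \<omega> j l" using D unfolding event_D_def by auto
        then show "(\<omega> (fst p, fst p) + \<omega> (snd p, snd p)) / 2 \<le> \<omega> p" using pj by (simp add: fval_def)
      qed
      have "\<omega> \<in> Aev n I c i" unfolding Aev_def using ws x01 od cond by (auto simp: xi)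
      then show "\<omega> \<in> (\<Union>i\<in>I. Aev n I c i)" using i by auto
    qed
    have each: "measure (MM n) (Aev n I c i) \<le> B" if i: "i \<in> I" for i
    proof -
      have "ennreal (measure (MM n) (Aev n I c i)) = emeasure (MM n) (Aev n I c i)"
        using M.emeasure_eq_measure by simp
      also have "\<dots> \<le> ennreal B" unfolding B_def
        by (rule main_bound[OF fin In i t0 mi lam_def])
      finally show ?thesis using B0 by simp
    qed
    have "prob_C n g I (in_C1 F I) - prob_C n g I (in_C2 F k I) = measure (MM n) X - measure (MM n) Y"
      unfolding prob_C_def X_def Y_def weight_space_eq ..
    also have "\<dots> = measure (MM n) (X - Y)" using M.finite_measure_Diff[OF XY YX] by simp
    also have "\<dots> \<le> measure (MM n) (\<Union>i\<in>I. Aev n I c i)"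
      by (rule M.finite_measure_mono[OF sub]) (use fin Aev_s in auto)
    also have "\<dots> \<le> (\<Sum>i\<in>I. measure (MM n) (Aev n I c i))"
      by (rule M.finite_measure_subadditive_finite) (use fin Aev_s in auto)
    also have "\<dots> \<le> (\<Sum>i\<in>I. B)" using each by (rule sum_mono)
    also have "\<dots> = real r * B" using cI by simp
    also have "\<dots> \<le> (2 / real r) ^ r * real r powr (- \<alpha>)" using ineq unfolding Bform by simp
    finally show "prob_C n g I (in_C1 F I) - prob_C n g I (in_C2 F k I) \<le> (2 / real r) ^ r * real r powr (- \<alpha>)" .
  qed
qed

end

theorem lemma2p4:
  fixes g F :: "real \<Rightarrow> real" and k \<alpha> :: real
  assumes g_pos: "\<forall>x\<in>{0..1}. g x > 0"
    and g_noninc: "antimono_on {0..1} g"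
    and g_diff: "\<forall>x\<in>{0..1}. g differentiable (at x within {0..1})"
    and g_int: "g integrable_on {0..1}"
    and g_total: "integral {0..1} g = 1"
    and F_def: "\<forall>x\<in>{0..1}. F x = integral {0..x} g"
    and hazard: "mono_on {0..<1} (\<lambda>x. g x / (1 - F x))"
    and k: "k > 1"
    and \<alpha>: "\<alpha> < k - 1"
  shows "\<exists>R::nat. \<forall>r\<ge>R. \<forall>(n::nat) (I::nat set). I \<subseteq> {0..<n} \<and> card I = r \<longrightarrow>
           prob_C n g I (in_C1 F I) - prob_C n g I (in_C2 F k I)
             \<le> (2 / real r) ^ r * real r powr (-\<alpha>)"
  using setting.final[OF setting.intro[OF g_pos g_noninc g_diff g_int g_total F_def] k \<alpha>] .

end
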